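(* Every abelian group possessing a subgroup of finite index which is of profinite type is itself of profinite type.
   Context: An abstract group is of profinite type if it admits a topology making it a profinite group (compact, Hausdorff, totally disconnected topological group). *)

theory Defs
  imports "HOL-Analysis.Analysis" "HOL-Algebra.Algebra"
begin

definition topological_group :: "('a, 'b) monoid_scheme \<Rightarrow> 'a topology \<Rightarrow> bool" where
  "topological_group G T \<longleftrightarrow>
     group G \<and> topspace T = carrier G \<and>
     continuous_map (prod_topology T T) T (\<lambda>(x, y). x \<otimes>\<^bsub>G\<^esub> y) \<and>
     continuous_map T T (\<lambda>x. inv\<^bsub>G\<^esub> x)"

definition totally_disconnected_space :: "'a topology \<Rightarrow> bool" where
  "totally_disconnected_space T \<longleftrightarrow> (\<forall>S. connectedin T S \<longrightarrow> (\<exists>a. S \<subseteq> {a}))"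

definition profinite_type :: "('a, 'b) monoid_scheme \<Rightarrow> bool" where
  "profinite_type G \<longleftrightarrow>
     (\<exists>T. topological_group G T \<and> compact_space T \<and> Hausdorff_space T \<and>
          totally_disconnected_space T)"

end

theory Submission
  imports Defs
begin

locale ctx = comm_group G for G (structure) +
  fixes H and T :: "'a topology"
  assumes sub: "subgroup H G"
    and tg: "topological_group (G\<lparr>carrier := H\<rparr>) T"
begin

definition OP where
  "OP U \<longleftrightarrow> U \<subseteq> carrier G \<and> (\<forall>g\<in>carrier G. openin T {h\<in>H. g \<otimes> h \<in> U})"

definition TG where "TG = topology OP"

lemma HG: "H \<subseteq> carrier G" using sub subgroup.subset by blast

lemma topT: "topspace T = H" using tg unfolding topological_group_def by simp

lemma multT: "continuous_map (prod_topology T T) T (\<lambda>(x, y). x \<otimes> y)"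
  using tg unfolding topological_group_def by simp

lemma invT: "continuous_map T T (\<lambda>x. inv x)"
proof -
  have "continuous_map T T (\<lambda>x. inv\<^bsub>G\<lparr>carrier := H\<rparr>\<^esub> x)"
    using tg unfolding topological_group_def by simp
  then show ?thesis
    by (rule continuous_map_eq) (simp add: topT sub)
qed

lemma istop: "istopology OP"
  unfolding istopology_def
proof (intro conjI allI impI ballI)
  fix S U assume "OP S" "OP U"
  then show "OP (S \<inter> U)"
    unfolding OP_def
  proof (intro conjI ballI)
    fix g assume "g \<in> carrier G" and A: "S \<subseteq> carrier G \<and> (\<forall>g\<in>carrier G. openin T {h\<in>H. g \<otimes> h \<in> S})"
      and B: "U \<subseteq> carrier G \<and> (\<forall>g\<in>carrier G. openin T {h\<in>H. g \<otimes> h \<in> U})"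
    then have "openin T ({h\<in>H. g \<otimes> h \<in> S} \<inter> {h\<in>H. g \<otimes> h \<in> U})" by blast
    moreover have "{h\<in>H. g \<otimes> h \<in> S} \<inter> {h\<in>H. g \<otimes> h \<in> U} = {h\<in>H. g \<otimes> h \<in> S \<inter> U}" by blast
    ultimately show "openin T {h\<in>H. g \<otimes> h \<in> S \<inter> U}" by simp
  qed auto
next
  fix K assume K: "\<forall>k\<in>K. OP k"
  show "OP (\<Union>K)" unfolding OP_def
  proof (intro conjI ballI)
    show "\<Union>K \<subseteq> carrier G" using K OP_def by blast
    fix g assume g: "g \<in> carrier G"
    have "{h\<in>H. g \<otimes> h \<in> \<Union>K} = \<Union>((\<lambda>k. {h\<in>H. g \<otimes> h \<in> k}) ` K)" by blast
    moreover have "openin T (\<Union>((\<lambda>k. {h\<in>H. g \<otimes> h \<in> k}) ` K))"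
      using K g unfolding OP_def by (intro openin_Union) auto
    ultimately show "openin T {h\<in>H. g \<otimes> h \<in> \<Union>K}" by simp
  qed
qed

lemma openTG: "openin TG U \<longleftrightarrow> OP U"
  unfolding TG_def using istop by simp

lemma topTG: "topspace TG = carrier G"
proof -
  have "OP (carrier G)" unfolding OP_def
  proof (intro conjI ballI)
    fix g assume "g \<in> carrier G"
    then have "{h\<in>H. g \<otimes> h \<in> carrier G} = topspace T" using HG topT by auto
    then show "openin T {h\<in>H. g \<otimes> h \<in> carrier G}" by simp
  qed auto
  then have "openin TG (carrier G)" by (simp add: openTG)
  moreover have "\<And>U. openin TG U \<Longrightarrow> U \<subseteq> carrier G" by (simp add: openTG OP_def)
  ultimately show ?thesis
    by (metis openin_subset openin_topspace subset_antisym)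
qed

lemma transT: assumes "g \<in> H" shows "continuous_map T T (\<lambda>h. g \<otimes> h)"
proof -
  have "continuous_map T (prod_topology T T) (\<lambda>h. (g, h))"
    using assms topT by (intro continuous_map_pairedI) auto
  from continuous_map_compose[OF this multT] show ?thesis by (simp add: o_def)
qed

lemma mem_H_iff: assumes "g \<in> carrier G" "h \<in> H" shows "g \<otimes> h \<in> H \<longleftrightarrow> g \<in> H"
proof
  assume "g \<otimes> h \<in> H"
  then have "(g \<otimes> h) \<otimes> inv h \<in> H" using sub assms by (simp add: subgroup.m_closed subgroup.m_inv_closed)
  then show "g \<in> H" using assms HG by (simp add: m_assoc subsetD)
next
  assume "g \<in> H" then show "g \<otimes> h \<in> H" using sub assms by (simp add: subgroup.m_closed)
qed

lemma openT_TG: assumes W: "openin T W" shows "openin TG W"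
  unfolding openTG OP_def
proof (intro conjI ballI)
  have WH: "W \<subseteq> H" using openin_subset[OF W] topT by simp
  then show "W \<subseteq> carrier G" using HG by blast
  fix g assume g: "g \<in> carrier G"
  show "openin T {h\<in>H. g \<otimes> h \<in> W}"
  proof (cases "g \<in> H")
    case True
    have "openin T {h \<in> topspace T. g \<otimes> h \<in> W}"
      using transT[OF True] W by (simp add: continuous_map_def)
    then show ?thesis by (simp add: topT)
  next
    case False
    then have "{h\<in>H. g \<otimes> h \<in> W} = {}" using mem_H_iff g WH by blast
    then show ?thesis by (metis openin_empty)
  qed
qed

lemma H_open: "openin TG H"
  unfolding openTG OP_def
proof (intro conjI ballI)
  show "H \<subseteq> carrier G" by (rule HG)
  fix g assume g: "g \<in> carrier G"
  show "openin T {h\<in>H. g \<otimes> h \<in> H}"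
  proof (cases "g \<in> H")
    case True
    then have "{h\<in>H. g \<otimes> h \<in> H} = topspace T" using mem_H_iff g topT by auto
    then show ?thesis by simp
  next
    case False
    then have "{h\<in>H. g \<otimes> h \<in> H} = {}" using mem_H_iff g by blast
    then show ?thesis by (metis openin_empty)
  qed
qed

lemma H_closed: "closedin TG H"
  unfolding closedin_def topTG
proof (intro conjI)
  show "H \<subseteq> carrier G" by (rule HG)
  show "openin TG (carrier G - H)"
    unfolding openTG OP_def
  proof (intro conjI ballI)
    fix g assume g: "g \<in> carrier G"
    show "openin T {h\<in>H. g \<otimes> h \<in> carrier G - H}"
    proof (cases "g \<in> H")
      case True
      then have "{h\<in>H. g \<otimes> h \<in> carrier G - H} = {}" using mem_H_iff g by blast
      then show ?thesis by (metis openin_empty)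
    next
      case False
      then have "{h\<in>H. g \<otimes> h \<in> carrier G - H} = topspace T" using mem_H_iff g topT HG by auto
      then show ?thesis by simp
    qed
  qed auto
qed

lemma trans_cont: assumes a: "a \<in> carrier G" shows "continuous_map TG TG (\<lambda>z. a \<otimes> z)"
  unfolding continuous_map_def topTG
proof (intro conjI allI impI)
  show "(\<lambda>z. a \<otimes> z) \<in> carrier G \<rightarrow> carrier G" using a by auto
  fix U assume "openin TG U"
  then have U: "OP U" by (simp add: openTG)
  show "openin TG {z \<in> carrier G. a \<otimes> z \<in> U}"
    unfolding openTG OP_def
  proof (intro conjI ballI)
    fix g assume g: "g \<in> carrier G"
    have "{h\<in>H. g \<otimes> h \<in> {z \<in> carrier G. a \<otimes> z \<in> U}} = {h\<in>H. (a \<otimes> g) \<otimes> h \<in> U}"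
      using a g HG by (auto simp: m_assoc)
    moreover have "openin T {h\<in>H. (a \<otimes> g) \<otimes> h \<in> U}" using U a g unfolding OP_def by auto
    ultimately show "openin T {h\<in>H. g \<otimes> h \<in> {z \<in> carrier G. a \<otimes> z \<in> U}}" by simp
  qed auto
qed

lemma sub_eq: "subtopology TG H = T"
proof (rule topology_eq[THEN iffD2], intro allI iffI)
  fix S assume "openin (subtopology TG H) S"
  then obtain U where U: "openin TG U" "S = U \<inter> H" by (auto simp: openin_subtopology)
  then have "openin T {h\<in>H. \<one> \<otimes> h \<in> U}" by (auto simp: openTG OP_def)
  moreover have "{h\<in>H. \<one> \<otimes> h \<in> U} = S" using U HG by auto
  ultimately show "openin T S" by simp
next
  fix S assume S: "openin T S"
  then have "S \<subseteq> H" using openin_subset topT by blast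
  then show "openin (subtopology TG H) S"
    using openT_TG[OF S] by (auto simp: openin_subtopology intro!: exI[of _ S])
qed

definition NB where "NB x A = {z \<in> carrier G. inv x \<otimes> z \<in> A}"

lemma NB_open: assumes "x \<in> carrier G" "openin T A" shows "openin TG (NB x A)"
proof -
  have "openin TG {z \<in> topspace TG. inv x \<otimes> z \<in> A}"
    using trans_cont[of "inv x"] assms openT_TG[OF assms(2)] by (simp add: continuous_map_def)
  then show ?thesis by (simp add: NB_def topTG)
qed

lemma NB_mem: assumes "x \<in> carrier G" "\<one> \<in> A" shows "x \<in> NB x A"
  using assms by (simp add: NB_def)

lemma NB_elt: assumes "x \<in> carrier G" "z \<in> carrier G" shows "z = x \<otimes> (inv x \<otimes> z)"
  using assms by (simp add: m_assoc[symmetric])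

lemma mult_rearr: assumes "x \<in> carrier G" "y \<in> carrier G" "z \<in> carrier G" "w \<in> carrier G"
  shows "z \<otimes> w = (x \<otimes> y) \<otimes> ((inv x \<otimes> z) \<otimes> (inv y \<otimes> w))"
proof -
  have "(inv x \<otimes> z) \<otimes> (inv y \<otimes> w) = (inv x \<otimes> inv y) \<otimes> (z \<otimes> w)"
    using assms by (simp add: m_ac)
  also have "\<dots> = inv (x \<otimes> y) \<otimes> (z \<otimes> w)" using assms by (simp add: inv_mult)
  finally show ?thesis using assms by (simp add: m_assoc[symmetric])
qed

lemma inv_rearr: assumes "x \<in> carrier G" "z \<in> carrier G"
  shows "inv z = inv x \<otimes> inv (inv x \<otimes> z)"
proof -
  have "inv (inv x \<otimes> z) = x \<otimes> inv z" using assms by (simp add: inv_mult m_comm)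
  then show ?thesis using assms by (simp add: m_assoc[symmetric])
qed

lemma mult_cont: "continuous_map (prod_topology TG TG) TG (\<lambda>(x, y). x \<otimes> y)"
  unfolding continuous_map_def topspace_prod_topology topTG
proof (intro conjI allI impI)
  show "(\<lambda>(x, y). x \<otimes> y) \<in> carrier G \<times> carrier G \<rightarrow> carrier G" by auto
  fix U assume "openin TG U"
  then have U: "OP U" by (simp add: openTG)
  show "openin (prod_topology TG TG) {p \<in> carrier G \<times> carrier G. (case p of (x, y) \<Rightarrow> x \<otimes> y) \<in> U}"
    unfolding openin_prod_topology_alt
  proof (intro allI impI)
    fix x y assume xy: "(x, y) \<in> {p \<in> carrier G \<times> carrier G. (case p of (x, y) \<Rightarrow> x \<otimes> y) \<in> U}"
    then have x: "x \<in> carrier G" and y: "y \<in> carrier G" and xyU: "x \<otimes> y \<in> U" by auto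
    define V where "V = {h\<in>H. (x \<otimes> y) \<otimes> h \<in> U}"
    have V: "openin T V" using U x y unfolding OP_def V_def by auto
    have one: "\<one> \<in> H" using sub subgroup.one_closed by blast
    have oneV: "\<one> \<in> V" using one xyU x y by (simp add: V_def)
    define P where "P = {p \<in> topspace (prod_topology T T). (\<lambda>(a, b). a \<otimes> b) p \<in> V}"
    have P: "openin (prod_topology T T) P" using multT V unfolding P_def continuous_map_def by blast
    have "(\<one>, \<one>) \<in> P" using one oneV topT by (simp add: P_def)
    then obtain A B where AB: "openin T A" "openin T B" "\<one> \<in> A" "\<one> \<in> B" "A \<times> B \<subseteq> P"
      using P unfolding openin_prod_topology_alt by blast
    show "\<exists>U' V'. openin TG U' \<and> openin TG V' \<and> x \<in> U' \<and> y \<in> V' \<and>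
        U' \<times> V' \<subseteq> {p \<in> carrier G \<times> carrier G. (case p of (x, y) \<Rightarrow> x \<otimes> y) \<in> U}"
    proof (intro exI conjI)
      show "openin TG (NB x A)" "openin TG (NB y B)" using NB_open x y AB by auto
      show "x \<in> NB x A" "y \<in> NB y B" using NB_mem x y AB by auto
      show "NB x A \<times> NB y B \<subseteq> {p \<in> carrier G \<times> carrier G. (case p of (x, y) \<Rightarrow> x \<otimes> y) \<in> U}"
      proof (rule subsetI)
        fix p assume "p \<in> NB x A \<times> NB y B"
        then obtain z w where p: "p = (z, w)" and zw: "z \<in> NB x A" "w \<in> NB y B" by blast
        then have z: "z \<in> carrier G" and w: "w \<in> carrier G" and
          a: "inv x \<otimes> z \<in> A" and b: "inv y \<otimes> w \<in> B" by (auto simp: NB_def)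
        then have "(inv x \<otimes> z, inv y \<otimes> w) \<in> P" using AB by blast
        then have "(inv x \<otimes> z) \<otimes> (inv y \<otimes> w) \<in> V" by (simp add: P_def)
        then have "z \<otimes> w \<in> U" using mult_rearr[OF x y z w] by (simp add: V_def)
        then show "p \<in> {p \<in> carrier G \<times> carrier G. (case p of (x, y) \<Rightarrow> x \<otimes> y) \<in> U}"
          using z w p by simp
      qed
    qed
  qed
qed

lemma inv_cont: "continuous_map TG TG (\<lambda>x. inv x)"
  unfolding continuous_map_def topTG
proof (intro conjI allI impI)
  show "(\<lambda>x. inv x) \<in> carrier G \<rightarrow> carrier G" by auto
  fix U assume "openin TG U"
  then have U: "OP U" by (simp add: openTG)
  show "openin TG {z \<in> carrier G. inv z \<in> U}"
  proof (subst openin_subopen, intro ballI)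
    fix x assume "x \<in> {z \<in> carrier G. inv z \<in> U}"
    then have x: "x \<in> carrier G" and xU: "inv x \<in> U" by auto
    define V where "V = {h\<in>H. inv x \<otimes> h \<in> U}"
    have V: "openin T V" using U x unfolding OP_def V_def by auto
    have one: "\<one> \<in> H" using sub subgroup.one_closed by blast
    define A where "A = {a \<in> topspace T. inv a \<in> V}"
    have A: "openin T A" using invT V unfolding A_def continuous_map_def by blast
    have oneA: "\<one> \<in> A" using one xU x topT by (simp add: A_def V_def)
    show "\<exists>W. openin TG W \<and> x \<in> W \<and> W \<subseteq> {z \<in> carrier G. inv z \<in> U}"
    proof (intro exI conjI)
      show "openin TG (NB x A)" using NB_open x A by auto
      show "x \<in> NB x A" using NB_mem x oneA by auto
      show "NB x A \<subseteq> {z \<in> carrier G. inv z \<in> U}"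
      proof clarify
        fix z assume "z \<in> NB x A"
        then have z: "z \<in> carrier G" and a: "inv x \<otimes> z \<in> A" by (auto simp: NB_def)
        then have "inv (inv x \<otimes> z) \<in> V" by (simp add: A_def)
        then have "inv z \<in> U" using inv_rearr[OF x z] by (simp add: V_def)
        then show "z \<in> carrier G \<and> inv z \<in> U" using z by simp
      qed
    qed
  qed
qed

lemma topgroup: "topological_group G TG"
  unfolding topological_group_def using mult_cont inv_cont topTG is_group by simp

lemma compact: assumes "compact_space T" and fin: "finite (rcosets H)" shows "compact_space TG"
proof -
  have cH: "compactin TG H"
    using assms(1) sub_eq compactin_subtopology[of TG H H] topT by (simp add: compact_space_def)
  have "compactin TG (\<Union>(rcosets H))"
  proof (rule compactin_Union[OF fin])
    fix S assume "S \<in> rcosets H"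
    then obtain a where a: "a \<in> carrier G" and S: "S = H #> a" by (auto simp: RCOSETS_def)
    have comm: "\<And>h. h \<in> H \<Longrightarrow> h \<otimes> a = a \<otimes> h" using a HG m_comm by blast
    have "S = (\<lambda>z. a \<otimes> z) ` H"
      unfolding S r_coset_def using comm by (auto simp: image_iff)
    then show "compactin TG S" using image_compactin[OF cH trans_cont[OF a]] by simp
  qed
  then show ?thesis using rcosets_part_G[OF sub] by (simp add: compact_space_def topTG)
qed

lemma hausdorff: assumes "Hausdorff_space T" shows "Hausdorff_space TG"
  unfolding Hausdorff_space_def topTG
proof (intro allI impI)
  fix x y assume xy: "x \<in> carrier G \<and> y \<in> carrier G \<and> x \<noteq> y"
  then have x: "x \<in> carrier G" and y: "y \<in> carrier G" by auto
  define h where "h = inv x \<otimes> y"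
  have hG: "h \<in> carrier G" using x y by (simp add: h_def)
  have one: "\<one> \<in> H" using sub subgroup.one_closed by blast
  have hne: "h \<noteq> \<one>"
  proof
    assume "h = \<one>"
    then have "x \<otimes> h = x" using x by simp
    then show False using xy NB_elt[OF x y] by (simp add: h_def)
  qed
  obtain U0 V0 where UV: "openin TG U0" "openin TG V0" "\<one> \<in> U0" "h \<in> V0" "disjnt U0 V0"
  proof (cases "h \<in> H")
    case True
    then obtain U0 V0 where "openin T U0" "openin T V0" "\<one> \<in> U0" "h \<in> V0" "disjnt U0 V0"
      using assms one hne topT unfolding Hausdorff_space_def by metis
    then show ?thesis using that openT_TG by blast
  next
    case False
    have "openin TG (carrier G - H)" using H_closed by (simp add: closedin_def topTG)
    then show ?thesis using that[of H "carrier G - H"] H_open one False hG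
      by (auto simp: disjnt_def)
  qed
  show "\<exists>U V. openin TG U \<and> openin TG V \<and> x \<in> U \<and> y \<in> V \<and> disjnt U V"
  proof (intro exI conjI)
    have tc: "continuous_map TG TG (\<lambda>z. inv x \<otimes> z)" using trans_cont x by simp
    show "openin TG {z \<in> topspace TG. inv x \<otimes> z \<in> U0}" using tc UV(1) by (simp add: continuous_map_def)
    show "openin TG {z \<in> topspace TG. inv x \<otimes> z \<in> V0}" using tc UV(2) by (simp add: continuous_map_def)
    show "x \<in> {z \<in> topspace TG. inv x \<otimes> z \<in> U0}" using x UV topTG by simp
    show "y \<in> {z \<in> topspace TG. inv x \<otimes> z \<in> V0}" using y UV topTG by (simp add: h_def)
    show "disjnt {z \<in> topspace TG. inv x \<otimes> z \<in> U0} {z \<in> topspace TG. inv x \<otimes> z \<in> V0}"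
      using UV(5) by (auto simp: disjnt_def)
  qed
qed

lemma totdisc: assumes "totally_disconnected_space T" shows "totally_disconnected_space TG"
  unfolding totally_disconnected_space_def
proof (intro allI impI)
  fix S assume S: "connectedin TG S"
  show "\<exists>a. S \<subseteq> {a}"
  proof (cases "S = {}")
    case True then show ?thesis by auto
  next
    case False
    then obtain x where xS: "x \<in> S" by auto
    have SG: "S \<subseteq> carrier G" using connectedin_subset_topspace[OF S] topTG by simp
    then have x: "x \<in> carrier G" using xS by auto
    define S' where "S' = (\<lambda>z. inv x \<otimes> z) ` S"
    have cS': "connectedin TG S'"
      unfolding S'_def by (rule connectedin_continuous_map_image[OF trans_cont S]) (use x in simp)
    have one: "\<one> \<in> H" using sub subgroup.one_closed by blast
    have "\<one> \<in> S'" using xS x unfolding S'_def by (auto intro!: image_eqI[of _ _ x])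
    then have "S' \<subseteq> H" using connectedin_clopen_cases[OF cS' H_closed H_open] one
      by (auto simp: disjnt_def)
    then have "connectedin T S'" using cS' sub_eq connectedin_subtopology[of TG H S'] by simp
    then obtain a where a: "S' \<subseteq> {a}" using assms unfolding totally_disconnected_space_def by blast
    have "S \<subseteq> {x \<otimes> a}"
    proof
      fix z assume z: "z \<in> S"
      then have "inv x \<otimes> z = a" using a unfolding S'_def by auto
      then show "z \<in> {x \<otimes> a}" using NB_elt[of x z] x z SG by auto
    qed
    then show ?thesis by blast
  qed
qed

end

theorem mainTheorem8:
  fixes G :: "('a, 'b) monoid_scheme" and H :: "'a set"
  assumes "comm_group G"
    and "subgroup H G"
    and "finite (rcosets\<^bsub>G\<^esub> H)"
    and "profinite_type (G\<lparr>carrier := H\<rparr>)"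
  shows "profinite_type G"
proof -
  obtain T where T: "topological_group (G\<lparr>carrier := H\<rparr>) T" "compact_space T" "Hausdorff_space T"
      "totally_disconnected_space T"
    using assms(4) unfolding profinite_type_def by blast
  interpret ctx G H T using assms(1,2) T(1) by (simp add: ctx_def ctx_axioms_def)
  show ?thesis unfolding profinite_type_def
    using topgroup compact[OF T(2) assms(3)] hausdorff[OF T(3)] totdisc[OF T(4)] by blast
qed

end
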